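(* Assume $0<\nu<1$ and $\mathbf{x}_E(t_0)\neq\mathbf{x}_P(t_0)$. Let $\phi:\mathbb R^2\to\mathbb R$ be continuous, $\phi^*=\min_{\mathbf{x}\in\mathcal A(t_0)}\phi(\mathbf{x})$ and $\mathcal X^*=\arg\min_{\mathbf{x}\in\mathcal A(t_0)}\phi(\mathbf{x})$. Then for every $\varepsilon>0$ there is $\delta>0$ such that: (a) if the evader moves at maximal speed $\nu$ in a straight line to some $\mathbf{x}^*\in\mathcal X^*$ and then stays there, then against any pursuer control, capture cannot occur at a point with $\phi>\phi^*$ (i.e. whenever capture occurs, $\phi(\mathbf{x}_E(t_f))\le\phi^*$); and (b) if the pursuer uses the law $\mathbf{v}_P=\mathbf{z}_P/\|\mathbf{z}_P\|$, $\mathbf{z}_P=(R_{\mathcal C}-R_{\mathcal A})\mathbf{r}/\|\mathbf{r}\|+\nu\mathbf{y}$, with this $\delta$, then against any admissible evader control capture occurs in finite time with $\phi(\mathbf{x}_E(t_f))\ge\phi^*-\varepsilon$. Hence this strategy pair is an $\varepsilon$-equilibrium.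
   Context: Setting (simple-motion pursuit–evasion in the plane). An evader and a pursuer have positions $\mathbf{x}_E(t),\mathbf{x}_P(t)\in\mathbb R^2$ with dynamics $\dot{\mathbf{x}}_E=\mathbf{v}_E$, $\dot{\mathbf{x}}_P=\mathbf{v}_P$, where $\|\mathbf{v}_E\|\le\nu$, $\|\mathbf{v}_P\|\le 1$, $0\le\nu<1$. The game starts at $t_0$ and ends at capture time $t_f$, the first time $\mathbf{x}_P=\mathbf{x}_E$. Set $\alpha=1/(1-\nu^2)$, $\gamma=\nu\alpha$, $\beta=\nu^2\alpha$, $\mathbf{r}=\mathbf{x}_E-\mathbf{x}_P$. The Apollonius disc $\mathcal A(t)$ is the closed disc with center $\mathbf{x}_{\mathcal A}(t)=\alpha\mathbf{x}_E(t)-\beta\mathbf{x}_P(t)$ and radius $R_{\mathcal A}(t)=\gamma\|\mathbf{r}(t)\|$. Given $\delta>0$, $\mathcal C$ is the closed disc with center $\mathbf{x}_{\mathcal C}=\mathbf{x}_{\mathcal A}(t_0)$ and radius $R_{\mathcal C}=R_{\mathcal A}(t_0)+\delta$; $\mathbf{y}(t)=\mathbf{x}_{\mathcal A}(t)-\mathbf{x}_{\mathcal C}$. Game of Final Location: the terminal payoff to the pursuer is $\phi(\mathbf{x}_E(t_f))$ (pursuer maximizes, evader minimizes). *)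

theory Defs
  imports "HOL-Analysis.Analysis"
begin

type_synonym pt = "real ^ 2"

definition ap_alpha :: "real \<Rightarrow> real" where "ap_alpha nu = 1 / (1 - nu^2)"
definition ap_gamma :: "real \<Rightarrow> real" where "ap_gamma nu = nu * ap_alpha nu"
definition ap_beta  :: "real \<Rightarrow> real" where "ap_beta nu = nu^2 * ap_alpha nu"

definition apollonius_center :: "real \<Rightarrow> pt \<Rightarrow> pt \<Rightarrow> pt" where
  "apollonius_center nu xe xp = ap_alpha nu *\<^sub>R xe - ap_beta nu *\<^sub>R xp"
definition apollonius_radius :: "real \<Rightarrow> pt \<Rightarrow> pt \<Rightarrow> real" where
  "apollonius_radius nu xe xp = ap_gamma nu * norm (xe - xp)"
definition apollonius_disc :: "real \<Rightarrow> pt \<Rightarrow> pt \<Rightarrow> pt set" where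
  "apollonius_disc nu xe xp = cball (apollonius_center nu xe xp) (apollonius_radius nu xe xp)"

text \<open>phi* = min of phi over A(t0) (written as the infimum of the image), X* = argmin.\<close>
definition phi_star :: "(pt \<Rightarrow> real) \<Rightarrow> real \<Rightarrow> pt \<Rightarrow> pt \<Rightarrow> real" where
  "phi_star \<phi> nu xe0 xp0 = Inf (\<phi> ` apollonius_disc nu xe0 xp0)"
definition argmin_set :: "(pt \<Rightarrow> real) \<Rightarrow> real \<Rightarrow> pt \<Rightarrow> pt \<Rightarrow> pt set" where
  "argmin_set \<phi> nu xe0 xp0 =
     {x \<in> apollonius_disc nu xe0 xp0. \<phi> x = phi_star \<phi> nu xe0 xp0}"

text \<open>Admissible trajectory with speed bound c from time t0 on, starting at x0
  (trajectories generated by measurable controls with norm at most c are exactly the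
  c-Lipschitz ones).\<close>
definition admissible_traj :: "real \<Rightarrow> real \<Rightarrow> pt \<Rightarrow> (real \<Rightarrow> pt) \<Rightarrow> bool" where
  "admissible_traj c t0 x0 x \<longleftrightarrow> x t0 = x0 \<and>
     (\<forall>s t. t0 \<le> s \<longrightarrow> t0 \<le> t \<longrightarrow> dist (x s) (x t) \<le> c * \<bar>s - t\<bar>)"

definition capture_time :: "real \<Rightarrow> (real \<Rightarrow> pt) \<Rightarrow> (real \<Rightarrow> pt) \<Rightarrow> real \<Rightarrow> bool" where
  "capture_time t0 xE xP tf \<longleftrightarrow> t0 \<le> tf \<and> xP tf = xE tf \<and> (\<forall>t. t0 \<le> t \<and> t < tf \<longrightarrow> xP t \<noteq> xE t)"

definition straight_evader :: "real \<Rightarrow> real \<Rightarrow> pt \<Rightarrow> pt \<Rightarrow> real \<Rightarrow> pt" where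
  "straight_evader nu t0 xe0 xs t =
     (if xs = xe0 then xe0
      else xe0 + (min (nu * max 0 (t - t0)) (dist xe0 xs) / dist xe0 xs) *\<^sub>R (xs - xe0))"

definition pursuer_law :: "real \<Rightarrow> real \<Rightarrow> pt \<Rightarrow> pt \<Rightarrow> pt \<Rightarrow> pt \<Rightarrow> pt" where
  "pursuer_law nu \<delta> xe0 xp0 xe xp =
     (let r = xe - xp;
          RA = apollonius_radius nu xe xp;
          xC = apollonius_center nu xe0 xp0;
          RC = apollonius_radius nu xe0 xp0 + \<delta>;
          y = apollonius_center nu xe xp - xC;
          z = (RC - RA) *\<^sub>R (r /\<^sub>R norm r) + nu *\<^sub>R y
      in z /\<^sub>R norm z)"

end

theory Submission
  imports Defs
begin


lemma aux_sqrt: fixes pp qq ss tt :: real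
  assumes "pp>0" "qq^2 = pp^2 + 2 * ss + tt"
  shows "qq \<le> pp + ss / pp + tt/(2*pp)"
proof -
  have e: "pp + ss / pp + tt/(2*pp) = (qq^2+pp^2)/(2*pp)" using assms by (simp add: field_simps power2_eq_square)
  have "2*pp*qq \<le> pp^2 + qq^2" by (rule sum_squares_bound)
  hence "qq*(2*pp) \<le> qq^2+pp^2" by (simp only: mult.commute add.commute mult.left_commute)
  hence "qq \<le> (qq^2+pp^2)/(2*pp)" using assms by (simp add: pos_le_divide_eq)
  thus ?thesis using e by simp
qed

lemma rho_step:
  fixes r d :: "'a::real_inner"
  assumes "norm r > 0"
  shows "norm (r + d) \<le> norm r + inner (r /\<^sub>R norm r) d + (norm d)^2 / (2 * norm r)"
proof -
  have sq: "(norm (r+d))^2 = (norm r)^2 + 2 * inner r d + (norm d)^2"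
    unfolding power2_norm_eq_inner by (simp add: inner_add_left inner_add_right inner_commute)
  have i: "inner (r /\<^sub>R norm r) d = inner r d / norm r" by (simp add: divide_inverse mult.commute)
  show ?thesis unfolding i by (rule aux_sqrt[OF assms sq])
qed

lemma z_identity:
  fixes u y :: "'a::real_inner"
  assumes "norm u = 1"
  shows "(norm (w *\<^sub>R u + \<nu> *\<^sub>R y))^2 - (norm ((\<nu>*w) *\<^sub>R u + y))^2 = (1 - \<nu>^2) * (w^2 - (norm y)^2)"
proof -
  have u: "inner u u = 1" using assms by (metis norm_eq_sqrt_inner real_sqrt_eq_1_iff)
  show ?thesis
    unfolding power2_norm_eq_inner
    by (simp add: inner_add_left inner_add_right inner_commute algebra_simps u power2_eq_square)
qed
lemma g_step:
  fixes e p a b xC z :: "'a::real_inner"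
  assumes nu: "0<\<nu>" "\<nu><1" and al: "\<gamma> = \<nu>*\<alpha>" "\<beta> = \<nu>*\<gamma>"
  and rho: "norm(e-p) > 0" and w: "RC - \<gamma>*norm(e-p) > 0" and a: "norm a \<le> \<nu>*h" and gp: "\<gamma> > 0"
  and z: "z = (RC - \<gamma>*norm(e-p)) *\<^sub>R ((e-p) /\<^sub>R norm(e-p)) + \<nu> *\<^sub>R (\<alpha>*\<^sub>R e - \<beta>*\<^sub>R p - xC)" and zn: "z \<noteq> 0"
  shows "(RC - \<gamma>*norm((e+a)-(p+b)))^2 - (norm(\<alpha>*\<^sub>R(e+a) - \<beta>*\<^sub>R(p+b) - xC))^2
          - ((RC - \<gamma>*norm(e-p))^2 - (norm(\<alpha>*\<^sub>R e - \<beta>*\<^sub>R p - xC))^2)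
     \<ge> 2*\<gamma>*(h*(norm z - norm((\<nu>*(RC-\<gamma>*norm(e-p))) *\<^sub>R ((e-p)/\<^sub>R norm(e-p)) + (\<alpha>*\<^sub>R e - \<beta>*\<^sub>R p - xC)))
              - norm z * norm(b - h*\<^sub>R(z/\<^sub>R norm z)))
       - ((RC-\<gamma>*norm(e-p))*\<gamma>*(norm(a-b))^2/norm(e-p) + (norm(\<alpha>*\<^sub>R a - \<beta>*\<^sub>R b))^2)"
proof -
  define \<rho> where "\<rho> = norm(e-p)"
  define w where "w = RC - \<gamma>*\<rho>"
  define u where "u = (e-p) /\<^sub>R \<rho>"
  define y where "y = \<alpha>*\<^sub>R e - \<beta>*\<^sub>R p - xC"
  define d where "d = a - b"
  define \<rho>' where "\<rho>' = norm((e+a)-(p+b))"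
  have zz: "z = w *\<^sub>R u + \<nu> *\<^sub>R y" using z unfolding w_def u_def y_def \<rho>_def by simp
  have wp: "w > 0" using w unfolding w_def \<rho>_def by simp
  have rp: "\<rho> > 0" using rho unfolding \<rho>_def by simp
  have r1: "\<rho>' \<le> \<rho> + inner u d + (norm d)^2/(2*\<rho>)"
    using rho_step[of "e-p" d] rho unfolding \<rho>'_def \<rho>_def u_def d_def
    by (simp add: algebra_simps)
  have "RC - \<gamma>*\<rho>' = w - \<gamma>*(\<rho>'-\<rho>)" unfolding w_def by (simp add: algebra_simps)
  hence w2: "(RC - \<gamma>*\<rho>')^2 \<ge> w^2 - 2*w*\<gamma>*(\<rho>'-\<rho>)"
    by (simp add: power2_diff)
  have "2*w*\<gamma>*(\<rho>'-\<rho>) \<le> 2*w*\<gamma>*(inner u d + (norm d)^2/(2*\<rho>))"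
    using r1 wp gp by (intro mult_left_mono) auto
  hence w3: "(RC - \<gamma>*\<rho>')^2 \<ge> w^2 - 2*w*\<gamma>*inner u d - w*\<gamma>*(norm d)^2/\<rho>"
    using w2 rp by (simp add: algebra_simps)
  have ye: "\<alpha>*\<^sub>R(e+a) - \<beta>*\<^sub>R(p+b) - xC = y + (\<alpha>*\<^sub>R a - \<beta>*\<^sub>R b)"
    unfolding y_def by (simp add: algebra_simps)
  have y2: "(norm(\<alpha>*\<^sub>R(e+a) - \<beta>*\<^sub>R(p+b) - xC))^2 = (norm y)^2 + 2*inner y (\<alpha>*\<^sub>R a - \<beta>*\<^sub>R b) + (norm(\<alpha>*\<^sub>R a - \<beta>*\<^sub>R b))^2"
    unfolding ye power2_norm_eq_inner by (simp add: inner_add_left inner_add_right inner_commute)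
  have ai: "\<alpha> = \<gamma>/\<nu>" using al nu by simp
  have key: "- 2*w*\<gamma>*inner u d - 2*inner y (\<alpha>*\<^sub>R a - \<beta>*\<^sub>R b)
      = 2*\<gamma>*(- (1/\<nu>) * inner ((\<nu>*w) *\<^sub>R u + y) a + inner z b)"
    unfolding zz d_def ai al(2) using nu
    by (simp add: inner_add_left inner_add_right inner_diff_left inner_diff_right inner_commute algebra_simps)
  have i1: "inner ((\<nu>*w) *\<^sub>R u + y) a \<le> norm ((\<nu>*w) *\<^sub>R u + y) * (\<nu>*h)"
  proof -
    have "inner ((\<nu>*w) *\<^sub>R u + y) a \<le> norm ((\<nu>*w) *\<^sub>R u + y) * norm a"
      by (rule norm_cauchy_schwarz)
    also have "\<dots> \<le> norm ((\<nu>*w) *\<^sub>R u + y) * (\<nu>*h)"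
      using a by (intro mult_left_mono) auto
    finally show ?thesis .
  qed
  hence i1': "(1/\<nu>) * inner ((\<nu>*w) *\<^sub>R u + y) a \<le> h * norm ((\<nu>*w) *\<^sub>R u + y)"
    using nu by (simp add: field_simps)
  have i2: "inner z b \<ge> h * norm z - norm z * norm (b - h *\<^sub>R (z /\<^sub>R norm z))"
  proof -
    have "inner z b = inner z (h *\<^sub>R (z /\<^sub>R norm z)) + inner z (b - h *\<^sub>R (z /\<^sub>R norm z))"
      by (simp add: inner_diff_right)
    also have "inner z (h *\<^sub>R (z /\<^sub>R norm z)) = h * norm z"
      using zn by (simp add: power2_norm_eq_inner[symmetric] power2_eq_square)
    moreover have "\<bar>inner z (b - h *\<^sub>R (z /\<^sub>R norm z))\<bar> \<le> norm z * norm (b - h *\<^sub>R (z /\<^sub>R norm z))"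
      by (rule Cauchy_Schwarz_ineq2)
    hence "- inner z (b - h *\<^sub>R (z /\<^sub>R norm z)) \<le> norm z * norm (b - h *\<^sub>R (z /\<^sub>R norm z))"
      by (rule abs_le_D2)
    ultimately show ?thesis by linarith
  qed
  have fin: "(RC - \<gamma>*\<rho>')^2 - (norm(\<alpha>*\<^sub>R(e+a) - \<beta>*\<^sub>R(p+b) - xC))^2 - (w^2 - (norm y)^2)
     \<ge> 2*\<gamma>*(h*(norm z - norm((\<nu>*w) *\<^sub>R u + y)) - norm z * norm(b - h*\<^sub>R(z/\<^sub>R norm z)))
       - (w*\<gamma>*(norm d)^2/\<rho> + (norm(\<alpha>*\<^sub>R a - \<beta>*\<^sub>R b))^2)"
  proof -
    have "2*\<gamma>*(h*(norm z - norm((\<nu>*w) *\<^sub>R u + y)) - norm z * norm(b - h*\<^sub>R(z/\<^sub>R norm z)))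
        \<le> 2*\<gamma>*(- (1/\<nu>) * inner ((\<nu>*w) *\<^sub>R u + y) a + inner z b)"
    proof (rule mult_left_mono)
      have "h*(norm z - norm((\<nu>*w) *\<^sub>R u + y)) = h*norm z - h*norm((\<nu>*w) *\<^sub>R u + y)"
        by (simp add: right_diff_distrib)
      thus "h*(norm z - norm((\<nu>*w) *\<^sub>R u + y)) - norm z * norm(b - h*\<^sub>R(z/\<^sub>R norm z))
        \<le> - (1/\<nu>) * inner ((\<nu>*w) *\<^sub>R u + y) a + inner z b" using i1' i2 by linarith
      show "0 \<le> 2*\<gamma>" using gp by simp
    qed
    thus ?thesis using key w3 y2 by linarith
  qed
  show ?thesis using fin unfolding \<rho>'_def w_def u_def y_def d_def \<rho>_def .
qed


lemma zq_bound:
  fixes u y :: "'a::real_inner"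
  assumes u: "norm u = 1" and nu: "0<\<nu>" "\<nu><1" and w: "w>0" "w \<le> RC" and g: "w^2 - (norm y)^2 \<ge> D2" and D2: "D2 > 0"
  shows "norm(w *\<^sub>R u + \<nu> *\<^sub>R y) - norm((\<nu>*w) *\<^sub>R u + y) \<ge> (1-\<nu>^2)*D2/(4*RC)"
    and "w *\<^sub>R u + \<nu> *\<^sub>R y \<noteq> 0"
proof -
  define Z where "Z = norm(w *\<^sub>R u + \<nu> *\<^sub>R y)"
  define Q where "Q = norm((\<nu>*w) *\<^sub>R u + y)"
  have id: "Z^2 - Q^2 = (1-\<nu>^2)*(w^2 - (norm y)^2)" using z_identity[OF u] unfolding Z_def Q_def .
  have nu2: "1 - \<nu>^2 > 0"
  proof -
    have "\<nu>*\<nu> < 1*1" using nu by (intro mult_strict_mono) auto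
    thus ?thesis by (simp add: power2_eq_square)
  qed
  have "(1-\<nu>^2)*(w^2 - (norm y)^2) \<ge> (1-\<nu>^2)*D2" using g nu2 by (simp add: mult_left_mono)
  hence zq: "Z^2 - Q^2 \<ge> (1-\<nu>^2)*D2" using id by simp
  have pos: "(1-\<nu>^2)*D2 > 0" using nu2 D2 by simp
  have yw: "norm y \<le> w"
  proof -
    have "(norm y)^2 \<le> w^2" using g D2 by linarith
    thus ?thesis using w power2_le_imp_le[of "norm y" w] by linarith
  qed
  have Zb: "Z \<le> 2*w"
  proof -
    have "Z \<le> norm (w *\<^sub>R u) + norm (\<nu> *\<^sub>R y)" unfolding Z_def by (rule norm_triangle_ineq)
    also have "\<dots> = w + \<nu> * norm y" using u w nu by simp
    also have "\<dots> \<le> w + 1 * w" proof -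
      have "\<nu> * norm y \<le> 1 * w" using nu yw by (intro mult_mono) auto
      thus ?thesis by linarith
    qed
    finally show ?thesis by simp
  qed
  have Qb: "Q \<le> 2*w"
  proof -
    have "Q \<le> norm ((\<nu>*w) *\<^sub>R u) + norm y" unfolding Q_def by (rule norm_triangle_ineq)
    also have "\<dots> = \<nu>*w + norm y" using u w nu by simp
    also have "\<dots> \<le> 1*w + w" proof -
      have "\<nu>*w \<le> 1*w" using nu w by (simp add: mult_right_mono)
      thus ?thesis using yw by linarith
    qed
    finally show ?thesis by simp
  qed
  have Z0: "Z > 0"
  proof -
    have "Q^2 \<ge> 0" by simp
    hence "Z^2 > 0" using zq pos by linarith
    hence "Z \<noteq> 0" by auto
    thus ?thesis unfolding Z_def by simp
  qed
  have Q0: "Q \<ge> 0" unfolding Q_def by simp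
  have ZQ: "Z - Q = (Z^2 - Q^2)/(Z+Q)" using Z0 Q0 by (simp add: field_simps power2_eq_square)
  have s1: "(Z^2 - Q^2)/(Z+Q) \<ge> (1-\<nu>^2)*D2/(Z+Q)" using zq Z0 Q0 by (simp add: divide_right_mono)
  have s2: "(1-\<nu>^2)*D2/(Z+Q) \<ge> (1-\<nu>^2)*D2/(4*RC)"
  proof (rule divide_left_mono)
    show "Z + Q \<le> 4*RC" using Zb Qb w by linarith
    show "0 \<le> (1-\<nu>^2)*D2" using pos by simp
    show "0 < 4*RC*(Z+Q)" using Z0 Q0 w by simp
  qed
  show "norm(w *\<^sub>R u + \<nu> *\<^sub>R y) - norm((\<nu>*w) *\<^sub>R u + y) \<ge> (1-\<nu>^2)*D2/(4*RC)"
    using ZQ s1 s2 unfolding Z_def Q_def by linarith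
  show "w *\<^sub>R u + \<nu> *\<^sub>R y \<noteq> 0" using Z0 unfolding Z_def by auto
qed



definition Wf :: "real \<Rightarrow> real \<Rightarrow> pt \<Rightarrow> pt \<Rightarrow> real" where
  "Wf \<nu> RC e p = RC - ap_gamma \<nu> * norm (e - p)"
definition Gf :: "real \<Rightarrow> real \<Rightarrow> pt \<Rightarrow> pt \<Rightarrow> pt \<Rightarrow> real" where
  "Gf \<nu> RC xC e p = (Wf \<nu> RC e p)^2 - (norm (apollonius_center \<nu> e p - xC))^2"

lemma ap_consts:
  assumes "0 < \<nu>" "\<nu> < 1"
  shows "1 - \<nu>^2 > 0" "ap_alpha \<nu> > 0" "ap_gamma \<nu> > 0" "ap_beta \<nu> > 0"
    "ap_gamma \<nu> = \<nu> * ap_alpha \<nu>" "ap_beta \<nu> = \<nu> * ap_gamma \<nu>"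
    "ap_alpha \<nu> - ap_beta \<nu> = 1"
proof -
  have "\<nu>*\<nu> < 1*1" using assms by (intro mult_strict_mono) auto
  thus n: "1 - \<nu>^2 > 0" by (simp add: power2_eq_square)
  thus a: "ap_alpha \<nu> > 0" unfolding ap_alpha_def by simp
  show "ap_gamma \<nu> > 0" using a assms unfolding ap_gamma_def by simp
  show "ap_beta \<nu> > 0" using a assms unfolding ap_beta_def by simp
  show "ap_gamma \<nu> = \<nu> * ap_alpha \<nu>" unfolding ap_gamma_def ..
  show "ap_beta \<nu> = \<nu> * ap_gamma \<nu>" unfolding ap_beta_def ap_gamma_def by (simp add: power2_eq_square)
  show "ap_alpha \<nu> - ap_beta \<nu> = 1" unfolding ap_beta_def ap_alpha_def using n
    by (simp add: field_simps)
qed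

lemma local_step:
  fixes xE xP :: "real \<Rightarrow> pt"
  assumes nu: "0 < \<nu>" "\<nu> < 1" and dl: "\<delta> > 0"
    and RCd: "RC = apollonius_radius \<nu> xE0 xP0 + \<delta>" and xCd: "xC = apollonius_center \<nu> xE0 xP0"
    and lip: "\<forall>s s'. t0 \<le> s \<longrightarrow> t0 \<le> s' \<longrightarrow> dist (xE s) (xE s') \<le> \<nu> * \<bar>s - s'\<bar>"
    and t: "t0 \<le> t" and ne: "xE t \<noteq> xP t"
    and der: "(xP has_vector_derivative pursuer_law \<nu> \<delta> xE0 xP0 (xE t) (xP t)) (at t within {t0..})"
    and W: "Wf \<nu> RC (xE t) (xP t) > 0" and G: "Gf \<nu> RC xC (xE t) (xP t) \<ge> \<delta>^2"
  shows "\<exists>d>0. \<forall>h. 0 < h \<and> h < d \<longrightarrow>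
      Gf \<nu> RC xC (xE (t+h)) (xP (t+h)) \<ge> Gf \<nu> RC xC (xE t) (xP t) + ap_gamma \<nu> * ((1-\<nu>^2)*\<delta>^2/(4*RC)) * h
      \<and> Wf \<nu> RC (xE (t+h)) (xP (t+h)) > 0"
proof -
  note cs = ap_consts[OF nu]
  define \<alpha> where "\<alpha> = ap_alpha \<nu>"
  define \<beta> where "\<beta> = ap_beta \<nu>"
  define \<gamma> where "\<gamma> = ap_gamma \<nu>"
  define e where "e = xE t"
  define p where "p = xP t"
  define \<rho> where "\<rho> = norm (e - p)"
  define w where "w = RC - \<gamma> * \<rho>"
  define u where "u = (e - p) /\<^sub>R \<rho>"
  define y where "y = \<alpha> *\<^sub>R e - \<beta> *\<^sub>R p - xC"
  define z where "z = w *\<^sub>R u + \<nu> *\<^sub>R y"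
  define D where "D = (1-\<nu>^2)*\<delta>^2/(4*RC)"
  have gp: "\<gamma> > 0" and ap: "\<alpha> > 0" and bp: "\<beta> > 0" and gd: "\<gamma> = \<nu> * \<alpha>" and bd: "\<beta> = \<nu> * \<gamma>"
    using cs unfolding \<alpha>_def \<beta>_def \<gamma>_def by auto
  have rp: "\<rho> > 0" using ne unfolding \<rho>_def e_def p_def by simp
  have RCp: "RC > 0" using RCd dl cs unfolding apollonius_radius_def by (simp add: add_nonneg_pos)
  have wp: "w > 0" using W unfolding w_def Wf_def \<rho>_def e_def p_def \<gamma>_def .
  have wle: "w \<le> RC" unfolding w_def using gp rp by simp
  have un: "norm u = 1" unfolding u_def using rp by (simp add: \<rho>_def)
  have Gy: "w^2 - (norm y)^2 \<ge> \<delta>^2" using G unfolding Gf_def Wf_def apollonius_center_def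
      w_def y_def \<rho>_def e_def p_def \<alpha>_def \<beta>_def \<gamma>_def .
  have zq: "norm z - norm ((\<nu>*w) *\<^sub>R u + y) \<ge> D" and zn: "z \<noteq> 0"
    using zq_bound[OF un nu wp wle Gy] dl unfolding z_def D_def by auto
  have Dp: "D > 0" unfolding D_def using cs RCp dl by simp
  have law: "pursuer_law \<nu> \<delta> xE0 xP0 (xE t) (xP t) = z /\<^sub>R norm z"
    unfolding pursuer_law_def Let_def z_def w_def u_def y_def RCd xCd apollonius_radius_def
      apollonius_center_def \<rho>_def e_def p_def \<alpha>_def \<beta>_def \<gamma>_def by simp
  define vP where "vP = z /\<^sub>R norm z"
  have nvP: "norm vP = 1" unfolding vP_def using zn by simp
  define \<eta> where "\<eta> = min 1 (D / (4 * norm z))"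
  have etap: "\<eta> > 0" unfolding \<eta>_def using Dp zn by simp
  have eta1: "\<eta> \<le> 1" unfolding \<eta>_def by simp
  have etaz: "norm z * \<eta> \<le> D/4"
  proof -
    have "norm z * \<eta> \<le> norm z * (D / (4 * norm z))" unfolding \<eta>_def
      by (intro mult_left_mono) auto
    also have "\<dots> = D/4" using zn by simp
    finally show ?thesis .
  qed
  have der': "(xP has_derivative (\<lambda>x. x *\<^sub>R vP)) (at t within {t0..})"
    using der unfolding has_vector_derivative_def law vP_def .
  then obtain d1 where d1: "d1 > 0" and d1P: "\<forall>s\<in>{t0..}. norm (s - t) < d1 \<longrightarrow>
      norm (xP s - xP t - (s - t) *\<^sub>R vP) \<le> \<eta> * norm (s - t)"
    unfolding has_derivative_within_alt using etap by blast
  define K where "K = 9*w*\<gamma>/\<rho> + (\<alpha> + 2*\<beta>)^2"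
  have Kp: "K \<ge> 0" unfolding K_def using wp gp rp by simp
  define d where "d = min d1 (min (\<gamma>*D/(2*K+1)) (w/(4*\<gamma>)))"
  have dp: "d > 0" unfolding d_def using d1 gp Dp Kp wp by simp
  show ?thesis
  proof (intro exI[of _ d] conjI allI impI dp)
    fix h assume h: "0 < h \<and> h < d"
    define a where "a = xE (t+h) - e"
    define b where "b = xP (t+h) - p"
    have na: "norm a \<le> \<nu> * h"
      using lip[rule_format, of "t+h" t] t h unfolding a_def e_def by (simp add: dist_norm)
    have nb1: "norm (b - h *\<^sub>R vP) \<le> \<eta> * h"
      using d1P[rule_format, of "t+h"] t h unfolding d_def b_def p_def by auto
    have nb: "norm b \<le> 2*h"
    proof -
      have "norm b \<le> norm (b - h *\<^sub>R vP) + norm (h *\<^sub>R vP)"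
        using norm_triangle_sub[of b "h *\<^sub>R vP"] by linarith
      also have "\<dots> \<le> \<eta> * h + h" using nb1 nvP h by simp
      also have "\<dots> \<le> 1 * h + h" using eta1 h by (intro add_right_mono mult_right_mono) auto
      finally show ?thesis by simp
    qed
    have "\<nu>*h \<le> 1*h" using nu h by (intro mult_right_mono) auto
    hence ah: "norm a \<le> h" using na by linarith
    have nab: "norm (a - b) \<le> 3*h" using norm_triangle_ineq4[of a b] ah nb by linarith
    have step: "(RC - \<gamma>*norm((e+a)-(p+b)))^2 - (norm(\<alpha>*\<^sub>R(e+a) - \<beta>*\<^sub>R(p+b) - xC))^2
          - ((RC - \<gamma>*norm(e-p))^2 - (norm(\<alpha>*\<^sub>R e - \<beta>*\<^sub>R p - xC))^2)
       \<ge> 2*\<gamma>*(h*(norm z - norm((\<nu>*(RC-\<gamma>*norm(e-p))) *\<^sub>R ((e-p)/\<^sub>R norm(e-p)) + (\<alpha>*\<^sub>R e - \<beta>*\<^sub>R p - xC)))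
                - norm z * norm(b - h*\<^sub>R(z/\<^sub>R norm z)))
         - ((RC-\<gamma>*norm(e-p))*\<gamma>*(norm(a-b))^2/norm(e-p) + (norm(\<alpha>*\<^sub>R a - \<beta>*\<^sub>R b))^2)"
      by (rule g_step[OF nu gd bd]) (use rp wp na gp zn in \<open>auto simp: \<rho>_def w_def z_def u_def y_def\<close>)
    have eN: "e + a = xE (t+h)" "p + b = xP (t+h)" unfolding a_def b_def by simp_all
    have Gdiff: "Gf \<nu> RC xC (xE (t+h)) (xP (t+h)) - Gf \<nu> RC xC (xE t) (xP t)
       \<ge> 2*\<gamma>*(h*(norm z - norm((\<nu>*w) *\<^sub>R u + y)) - norm z * norm(b - h*\<^sub>R vP))
         - (w*\<gamma>*(norm(a-b))^2/\<rho> + (norm(\<alpha>*\<^sub>R a - \<beta>*\<^sub>R b))^2)"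
      using step unfolding eN Gf_def Wf_def apollonius_center_def
      unfolding \<alpha>_def[symmetric] \<beta>_def[symmetric] \<gamma>_def[symmetric] e_def[symmetric] p_def[symmetric]
        \<rho>_def[symmetric] w_def[symmetric] u_def[symmetric] y_def[symmetric] vP_def[symmetric] .
    have b1: "h*(norm z - norm((\<nu>*w) *\<^sub>R u + y)) \<ge> h*D" using zq h by (intro mult_left_mono) auto
    have b2: "norm z * norm(b - h*\<^sub>R vP) \<le> D/4 * h"
    proof -
      have "norm z * norm(b - h*\<^sub>R vP) \<le> norm z * (\<eta> * h)" using nb1 by (intro mult_left_mono) auto
      also have "\<dots> = (norm z * \<eta>) * h" by simp
      also have "\<dots> \<le> D/4 * h" using etaz h by (intro mult_right_mono) auto
      finally show ?thesis .
    qed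
    have b3a: "(norm(a-b))^2 \<le> 9*h^2"
    proof -
      have "(norm(a-b))^2 \<le> (3*h)^2" using nab by (intro power_mono) auto
      thus ?thesis by (simp add: power_mult_distrib)
    qed
    have b3b: "w*\<gamma>*(norm(a-b))^2/\<rho> \<le> 9*w*\<gamma>/\<rho> * h^2"
    proof -
      have "w*\<gamma>*(norm(a-b))^2 \<le> w*\<gamma>*(9*h^2)" using b3a wp gp by (intro mult_left_mono) auto
      hence "w*\<gamma>*(norm(a-b))^2/\<rho> \<le> w*\<gamma>*(9*h^2)/\<rho>" using rp by (intro divide_right_mono) auto
      moreover have "w*\<gamma>*(9*h^2)/\<rho> = 9*w*\<gamma>/\<rho> * h^2" by simp
      ultimately show ?thesis by linarith
    qed
    have b3c: "(norm(\<alpha>*\<^sub>R a - \<beta>*\<^sub>R b))^2 \<le> (\<alpha>+2*\<beta>)^2 * h^2"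
    proof -
      have "norm(\<alpha>*\<^sub>R a - \<beta>*\<^sub>R b) \<le> norm(\<alpha>*\<^sub>R a) + norm(\<beta>*\<^sub>R b)" by (rule norm_triangle_ineq4)
      also have "\<dots> = \<alpha> * norm a + \<beta> * norm b" using ap bp by simp
      also have "\<dots> \<le> \<alpha> * h + \<beta> * (2*h)" using ah nb ap bp by (intro add_mono mult_left_mono) auto
      finally have "norm(\<alpha>*\<^sub>R a - \<beta>*\<^sub>R b) \<le> (\<alpha>+2*\<beta>) * h" by (simp add: algebra_simps)
      hence "(norm(\<alpha>*\<^sub>R a - \<beta>*\<^sub>R b))^2 \<le> ((\<alpha>+2*\<beta>) * h)^2" by (intro power_mono) auto
      thus ?thesis by (simp add: power_mult_distrib)
    qed
    have b3: "w*\<gamma>*(norm(a-b))^2/\<rho> + (norm(\<alpha>*\<^sub>R a - \<beta>*\<^sub>R b))^2 \<le> K * h^2"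
      using b3b b3c unfolding K_def by (simp add: algebra_simps)
    have b4: "K * h^2 \<le> \<gamma>*D/2 * h"
    proof -
      have hl: "h \<le> \<gamma>*D/(2*K+1)" using h unfolding d_def by simp
      have "K * h \<le> K * (\<gamma>*D/(2*K+1))" using hl Kp by (intro mult_left_mono) auto
      also have "\<dots> \<le> \<gamma>*D/2"
      proof -
        have "K * (\<gamma>*D) * 2 \<le> (2*K+1) * (\<gamma>*D)" using gp Dp by (simp add: algebra_simps)
        thus ?thesis using Kp by (simp add: field_simps)
      qed
      finally have "K*h \<le> \<gamma>*D/2" .
      hence "(K*h)*h \<le> (\<gamma>*D/2)*h" using h by (intro mult_right_mono) auto
      thus ?thesis by (simp add: power2_eq_square mult.assoc)
    qed
    have b5: "2*\<gamma>*(h*(norm z - norm((\<nu>*w) *\<^sub>R u + y)) - norm z * norm(b - h*\<^sub>R vP))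
        \<ge> 2*\<gamma>*(h*D - D/4 * h)"
    proof (rule mult_left_mono)
      show "h*D - D/4 * h \<le> h*(norm z - norm((\<nu>*w) *\<^sub>R u + y)) - norm z * norm(b - h*\<^sub>R vP)"
        using b1 b2 by linarith
    qed (use gp in simp)
    have b6: "2*\<gamma>*(h*D - D/4 * h) = 3/2 * (\<gamma>*D*h)" by (simp add: algebra_simps)
    have b7: "\<gamma>*D/2 * h = 1/2 * (\<gamma>*D*h)" by simp
    have "Gf \<nu> RC xC (xE (t+h)) (xP (t+h)) \<ge> Gf \<nu> RC xC (xE t) (xP t) + \<gamma>*D*h"
      using Gdiff b3 b4 b5 b6 b7 by linarith
    thus "Gf \<nu> RC xC (xE (t+h)) (xP (t+h)) \<ge> Gf \<nu> RC xC (xE t) (xP t) + ap_gamma \<nu> * ((1-\<nu>^2)*\<delta>^2/(4*RC)) * h"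
      unfolding \<gamma>_def D_def .
    have nn: "norm (xE (t+h) - xP (t+h)) \<le> \<rho> + 3*h"
    proof -
      have "xE (t+h) - xP (t+h) = (e - p) + (a - b)" unfolding a_def b_def by simp
      hence "norm (xE (t+h) - xP (t+h)) \<le> norm (e-p) + norm (a-b)" by (metis norm_triangle_ineq)
      thus ?thesis using nab unfolding \<rho>_def by linarith
    qed
    have "\<gamma> * norm (xE (t+h) - xP (t+h)) \<le> \<gamma> * (\<rho> + 3*h)" using nn gp by (intro mult_left_mono) auto
    moreover have "h \<le> w/(4*\<gamma>)" using h unfolding d_def by simp
    hence "\<gamma> * h \<le> w/4" using gp by (simp add: field_simps)
    ultimately show "Wf \<nu> RC (xE (t+h)) (xP (t+h)) > 0"
      unfolding Wf_def \<gamma>_def[symmetric] using wp unfolding w_def by (simp add: algebra_simps)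
  qed
qed



lemma creep:
  fixes P :: "real \<Rightarrow> bool" and a b :: real
  assumes cl: "\<And>s. a < s \<Longrightarrow> s \<le> b \<Longrightarrow> (\<forall>r. a \<le> r \<and> r < s \<longrightarrow> P r) \<Longrightarrow> P s"
    and Pa: "P a"
    and step: "\<And>s. a \<le> s \<Longrightarrow> s < b \<Longrightarrow> P s \<Longrightarrow> \<exists>d>0. \<forall>h. 0 < h \<and> h < d \<longrightarrow> P (s+h)"
    and sab: "a \<le> s" "s \<le> b"
  shows "P s"
proof (rule ccontr)
  assume nP: "\<not> P s"
  define B where "B = {r. a \<le> r \<and> r \<le> b \<and> \<not> P r}"
  have Bne: "B \<noteq> {}" using nP sab unfolding B_def by auto
  have Bbd: "bdd_below B" unfolding B_def by (rule bdd_belowI[of _ a]) auto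
  define s1 where "s1 = Inf B"
  have low: "\<And>r. r \<in> B \<Longrightarrow> s1 \<le> r" unfolding s1_def using Bbd by (simp add: cInf_lower)
  have as1: "a \<le> s1" unfolding s1_def using Bne by (rule cInf_greatest) (auto simp: B_def)
  have s1b: "s1 \<le> b" using Bne low unfolding B_def by fastforce
  have below: "\<forall>r. a \<le> r \<and> r < s1 \<longrightarrow> P r"
  proof (intro allI impI)
    fix r assume r: "a \<le> r \<and> r < s1"
    show "P r"
    proof (rule ccontr)
      assume "\<not> P r"
      hence "r \<in> B" using r s1b unfolding B_def by auto
      thus False using low r by fastforce
    qed
  qed
  have Ps1: "P s1"
  proof (cases "s1 = a")
    case True thus ?thesis using Pa by simp
  next
    case False thus ?thesis using cl[OF _ s1b below] as1 by simp
  qed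
  show False
  proof (cases "s1 < b")
    case False
    hence "s1 = b" using s1b by simp
    then obtain r where "r \<in> B" using Bne by auto
    hence "r = b" "\<not> P r" using low \<open>s1 = b\<close> unfolding B_def by fastforce+
    thus False using Ps1 \<open>s1 = b\<close> by simp
  next
    case True
    obtain d where d: "d > 0" "\<forall>h. 0 < h \<and> h < d \<longrightarrow> P (s1+h)" using step[OF as1 True Ps1] by blast
    have "s1 + d \<le> Inf B"
    proof (rule cInf_greatest[OF Bne])
      fix r assume rB: "r \<in> B"
      have "s1 \<le> r" using low rB .
      moreover have "r \<noteq> s1" using rB Ps1 unfolding B_def by auto
      moreover have "\<not> P r" using rB unfolding B_def by auto
      ultimately show "s1 + d \<le> r" using d(2)[rule_format, of "r - s1"] by force
    qed
    thus False using d(1) unfolding s1_def by simp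
  qed
qed

lemma apollonius_identity:
  fixes x e p :: "'a::real_inner"
  assumes nu: "0 < \<nu>" "\<nu> < 1"
  shows "(norm (x - e))^2 - \<nu>^2 * (norm (x - p))^2
     = (1 - \<nu>^2) * ((norm (x - (ap_alpha \<nu> *\<^sub>R e - ap_beta \<nu> *\<^sub>R p)))^2 - (ap_gamma \<nu> * norm (e - p))^2)"
proof -
  note cs = ap_consts[OF nu]
  define \<alpha> where "\<alpha> = ap_alpha \<nu>"
  define \<beta> where "\<beta> = ap_beta \<nu>"
  define \<gamma> where "\<gamma> = ap_gamma \<nu>"
  have n: "1 - \<nu>^2 \<noteq> 0" using cs by simp
  have f1: "(1 - \<nu>^2) * \<beta> = \<nu>^2" unfolding \<beta>_def ap_beta_def ap_alpha_def using n by simp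
  have f2: "(1 - \<nu>^2) * (\<beta>*\<beta> - \<gamma>*\<gamma>) = - (\<nu>^2)"
  proof -
    define k where "k = 1 - \<nu>^2"
    have k0: "k \<noteq> 0" using n unfolding k_def .
    have bb: "\<beta> = \<nu>^2 / k" unfolding \<beta>_def ap_beta_def ap_alpha_def k_def by simp
    have gg: "\<gamma> = \<nu> / k" unfolding \<gamma>_def ap_gamma_def ap_alpha_def k_def by simp
    have "\<beta>*\<beta> - \<gamma>*\<gamma> = \<nu>^2 * (\<nu>^2 - 1) / (k*k)" unfolding bb gg using k0 by (simp add: field_simps power2_eq_square)
    also have "\<nu>^2 - 1 = - k" unfolding k_def by simp
    finally have "\<beta>*\<beta> - \<gamma>*\<gamma> = - (\<nu>^2) / k" using k0 by (simp add: field_simps power2_eq_square)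
    thus ?thesis using k0 unfolding k_def[symmetric] by simp
  qed
  define a where "a = x - e"
  define r where "r = e - p"
  have xc: "x - (\<alpha> *\<^sub>R e - \<beta> *\<^sub>R p) = a - \<beta> *\<^sub>R r"
    unfolding a_def r_def using cs(7) unfolding \<alpha>_def[symmetric] \<beta>_def[symmetric]
    by (simp add: algebra_simps)
  have xp: "x - p = a + r" unfolding a_def r_def by simp
  have L: "(norm (x - e))^2 - \<nu>^2 * (norm (x - p))^2
      = (1 - \<nu>^2) * inner a a - 2 * \<nu>^2 * inner a r - \<nu>^2 * inner r r"
    unfolding xp a_def[symmetric] power2_norm_eq_inner
    by (simp add: inner_add_left inner_add_right inner_commute algebra_simps)
  have R: "(norm (a - \<beta> *\<^sub>R r))^2 - (\<gamma> * norm r)^2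
      = inner a a - 2 * \<beta> * inner a r + (\<beta>*\<beta> - \<gamma>*\<gamma>) * inner r r"
    unfolding power_mult_distrib power2_norm_eq_inner
    by (simp add: inner_diff_left inner_diff_right inner_commute algebra_simps power2_eq_square)
  have "(1 - \<nu>^2) * (inner a a - 2 * \<beta> * inner a r + (\<beta>*\<beta> - \<gamma>*\<gamma>) * inner r r)
     = (1 - \<nu>^2) * inner a a - 2 * ((1 - \<nu>^2) * \<beta>) * inner a r + ((1 - \<nu>^2) * (\<beta>*\<beta> - \<gamma>*\<gamma>)) * inner r r"
    by (simp add: algebra_simps)
  also have "\<dots> = (1 - \<nu>^2) * inner a a - 2 * \<nu>^2 * inner a r - \<nu>^2 * inner r r"
    unfolding f1 f2 by simp
  finally show ?thesis using L R xc
    unfolding \<alpha>_def[symmetric] \<beta>_def[symmetric] \<gamma>_def[symmetric] r_def[symmetric] by simp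
qed



lemma part_a:
  fixes xP :: "real \<Rightarrow> pt"
  assumes nu: "0 < \<nu>" "\<nu> < 1" and ne: "xE0 \<noteq> xP0"
    and xs: "xs \<in> apollonius_disc \<nu> xE0 xP0"
    and adm: "admissible_traj 1 t0 xP0 xP"
    and cap: "capture_time t0 (straight_evader \<nu> t0 xE0 xs) xP tf"
  shows "straight_evader \<nu> t0 xE0 xs tf = xs"
proof (cases "xs = xE0")
  case True thus ?thesis unfolding straight_evader_def by simp
next
  case False
  note cs = ap_consts[OF nu]
  define dd where "dd = dist xE0 xs"
  have ddp: "dd > 0" unfolding dd_def using False by simp
  have tf: "t0 \<le> tf" "xP tf = straight_evader \<nu> t0 xE0 xs tf" using cap unfolding capture_time_def by auto
  have mx: "max 0 (tf - t0) = tf - t0" using tf by simp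
  show ?thesis
  proof (cases "\<nu> * (tf - t0) \<ge> dd")
    case True
    hence "min (\<nu> * (tf - t0)) dd = dd" by simp
    thus ?thesis unfolding straight_evader_def mx dd_def[symmetric] using False ddp by simp
  next
    case lt: False
    define l where "l = \<nu> * (tf - t0) / dd"
    have l0: "0 \<le> l" unfolding l_def using nu tf ddp by simp
    have l1: "l < 1" unfolding l_def using lt ddp by simp
    define x where "x = xE0 + l *\<^sub>R (xs - xE0)"
    have sx: "straight_evader \<nu> t0 xE0 xs tf = x"
      unfolding straight_evader_def mx dd_def[symmetric] x_def l_def using False lt by simp
    have xe: "norm (x - xE0) = \<nu> * (tf - t0)"
      unfolding x_def using l0 ddp nu tf by (simp add: l_def dd_def dist_norm norm_minus_commute)
    have A: "xP t0 = xP0" "\<forall>s t. t0 \<le> s \<longrightarrow> t0 \<le> t \<longrightarrow> dist (xP s) (xP t) \<le> 1 * \<bar>s - t\<bar>"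
      using adm unfolding admissible_traj_def by auto
    have "dist (xP tf) (xP t0) \<le> 1 * \<bar>tf - t0\<bar>" using A(2)[rule_format, of tf t0] tf(1) by simp
    hence xp: "norm (x - xP0) \<le> tf - t0" using A(1) tf sx by (simp add: dist_norm)
    have c1: "\<nu> * norm (x - xP0) \<le> norm (x - xE0)" unfolding xe using xp nu by simp
    define c0 where "c0 = apollonius_center \<nu> xE0 xP0"
    define R0 where "R0 = apollonius_radius \<nu> xE0 xP0"
    define \<rho>0 where "\<rho>0 = norm (xE0 - xP0)"
    have r0: "\<rho>0 > 0" unfolding \<rho>0_def using ne by simp
    have e0: "xE0 - c0 = - (ap_beta \<nu> *\<^sub>R (xE0 - xP0))" unfolding c0_def apollonius_center_def
      using cs(7) by (simp add: algebra_simps)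
    have ne0: "norm (xE0 - c0) < R0"
    proof -
      have "norm (xE0 - c0) = ap_beta \<nu> * \<rho>0" unfolding e0 \<rho>0_def using cs by simp
      also have "\<dots> < ap_gamma \<nu> * \<rho>0" using cs r0 nu by (simp add: mult_strict_right_mono)
      finally show ?thesis unfolding R0_def apollonius_radius_def \<rho>0_def .
    qed
    have nxs: "norm (xs - c0) \<le> R0" using xs unfolding apollonius_disc_def c0_def R0_def
      by (simp add: dist_norm norm_minus_commute)
    have "x - c0 = (1 - l) *\<^sub>R (xE0 - c0) + l *\<^sub>R (xs - c0)" unfolding x_def by (simp add: algebra_simps)
    hence "norm (x - c0) \<le> (1 - l) * norm (xE0 - c0) + l * norm (xs - c0)"
      using l0 l1 by (metis (no_types, lifting) abs_of_nonneg diff_ge_0_iff_ge less_imp_le norm_scaleR norm_triangle_ineq)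
    also have "\<dots> < (1 - l) * R0 + l * R0"
      using ne0 nxs l0 l1 by (intro add_less_le_mono mult_strict_left_mono mult_left_mono) auto
    finally have xin: "norm (x - c0) < R0" by (simp add: algebra_simps)
    have R0p: "R0 \<ge> 0" using ne0 by (meson norm_ge_zero order.strict_trans1 less_imp_le)
    have id: "(norm (x - xE0))^2 - \<nu>^2 * (norm (x - xP0))^2 = (1 - \<nu>^2) * ((norm (x - c0))^2 - R0^2)"
      using apollonius_identity[OF nu, of x xE0 xP0]
      unfolding c0_def R0_def apollonius_center_def apollonius_radius_def by simp
    have "(norm (x - c0))^2 < R0^2" using xin by (simp add: power_strict_mono)
    hence "(1 - \<nu>^2) * ((norm (x - c0))^2 - R0^2) < 0" using cs(1) by (simp add: mult_pos_neg)
    hence "(norm (x - xE0))^2 < (\<nu> * norm (x - xP0))^2" using id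
      by (simp add: power_mult_distrib)
    hence "norm (x - xE0) < \<nu> * norm (x - xP0)" using nu by (simp add: power_less_imp_less_base)
    thus ?thesis using c1 by simp
  qed
qed



lemma left_lim_ge:
  fixes f :: "real \<Rightarrow> real"
  assumes "continuous_on {a..b} f" "a < b" "\<forall>r. a \<le> r \<and> r < b \<longrightarrow> f r \<ge> 0"
  shows "f b \<ge> 0"
proof (rule continuous_ge_on_closure[of "{a..<b}" f b 0])
  show "continuous_on (closure {a..<b}) f" using assms by simp
  show "b \<in> closure {a..<b}" using assms by simp
  show "\<And>x. x \<in> {a..<b} \<Longrightarrow> 0 \<le> f x" using assms by auto
qed

lemma lip_cont:
  fixes x :: "real \<Rightarrow> pt"
  assumes "c \<ge> 0" "\<forall>s t. t0 \<le> s \<longrightarrow> t0 \<le> t \<longrightarrow> dist (x s) (x t) \<le> c * \<bar>s - t\<bar>"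
  shows "continuous_on {t0..} x"
  unfolding continuous_on_iff
proof (intro ballI allI impI)
  fix s e assume s: "s \<in> {t0..}" and e: "(0::real) < e"
  show "\<exists>d>0. \<forall>s'\<in>{t0..}. dist s' s < d \<longrightarrow> dist (x s') (x s) < e"
  proof (intro exI[of _ "e/(c+1)"] conjI ballI impI)
    show "e/(c+1) > 0" using e assms by simp
    fix s' assume s': "s' \<in> {t0..}" and d: "dist s' s < e/(c+1)"
    have "dist (x s') (x s) \<le> c * \<bar>s' - s\<bar>" using assms s s' by auto
    also have "\<dots> \<le> (c+1) * \<bar>s' - s\<bar>" by (simp add: mult_right_mono)
    also have "\<dots> < (c+1) * (e/(c+1))" using d assms by (intro mult_strict_left_mono) (auto simp: dist_real_def)
    also have "\<dots> = e" using assms by simp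
    finally show "dist (x s') (x s) < e" .
  qed
qed

lemma part_b_loc:
  fixes xE xP :: "real \<Rightarrow> pt"
  assumes nu: "0 < \<nu>" "\<nu> < 1" and ne: "xE0 \<noteq> xP0" and dl: "\<delta> > 0"
    and admE: "admissible_traj \<nu> t0 xE0 xE" and P0: "xP t0 = xP0" and contP: "continuous_on {t0..} xP"
    and derH: "\<forall>t\<ge>t0. (\<forall>s. t0 \<le> s \<and> s \<le> t \<longrightarrow> xP s \<noteq> xE s) \<longrightarrow>
             (xP has_vector_derivative pursuer_law \<nu> \<delta> xE0 xP0 (xE t) (xP t)) (at t within {t0..})"
  shows "\<exists>tf. capture_time t0 xE xP tf \<and>
           dist (xE tf) (apollonius_center \<nu> xE0 xP0) \<le> apollonius_radius \<nu> xE0 xP0 + \<delta>"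
proof -
  note cs = ap_consts[OF nu]
  define RC where "RC = apollonius_radius \<nu> xE0 xP0 + \<delta>"
  define xC where "xC = apollonius_center \<nu> xE0 xP0"
  have RCp: "RC > 0" using cs dl ne unfolding RC_def apollonius_radius_def by (simp add: add_nonneg_pos)
  define c where "c = ap_gamma \<nu> * ((1-\<nu>^2)*\<delta>^2/(4*RC))"
  have cp: "c > 0" unfolding c_def using cs RCp dl by simp
  have E0: "xE t0 = xE0" and lip: "\<forall>s s'. t0 \<le> s \<longrightarrow> t0 \<le> s' \<longrightarrow> dist (xE s) (xE s') \<le> \<nu> * \<bar>s - s'\<bar>"
    using admE unfolding admissible_traj_def by auto
  have contE: "continuous_on {t0..} xE" using lip_cont[OF _ lip] nu by simp
  define g where "g t = Gf \<nu> RC xC (xE t) (xP t)" for t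
  define W where "W t = Wf \<nu> RC (xE t) (xP t)" for t
  define F where "F t = RC - ap_gamma \<nu> * norm (xE t - xP t) - norm (apollonius_center \<nu> (xE t) (xP t) - xC)" for t
  have contg: "continuous_on {t0..} g" unfolding g_def Gf_def Wf_def apollonius_center_def
    by (intro continuous_intros contE contP)
  have contW: "continuous_on {t0..} W" unfolding W_def Wf_def
    by (intro continuous_intros contE contP)
  have contF: "continuous_on {t0..} F" unfolding F_def apollonius_center_def
    by (intro continuous_intros contE contP)
  define P where "P t \<longleftrightarrow> W t > 0 \<and> g t \<ge> \<delta>^2 + c * (t - t0)" for t
  have Wsq: "g t \<le> (W t)^2" for t unfolding g_def W_def Gf_def by simp
  have Wle: "W t \<le> RC" for t unfolding W_def Wf_def using cs by simp
  have Pt0: "P t0"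
  proof -
    have "W t0 = \<delta>" unfolding W_def Wf_def RC_def E0 P0 apollonius_radius_def by simp
    moreover have "g t0 = \<delta>^2" unfolding g_def Gf_def Wf_def RC_def xC_def E0 P0 apollonius_radius_def by simp
    ultimately show ?thesis unfolding P_def using dl by simp
  qed
  have INV: "P T" if T: "t0 \<le> T" and ncT: "\<forall>s. t0 \<le> s \<and> s \<le> T \<longrightarrow> xP s \<noteq> xE s" for T
  proof (rule creep[of t0 T P T])
    show "P t0" by (rule Pt0)
    show "t0 \<le> T" "T \<le> T" using T by auto
  next
    fix s assume s: "t0 < s" "s \<le> T" and below: "\<forall>r. t0 \<le> r \<and> r < s \<longrightarrow> P r"
    have sub: "{t0..s} \<subseteq> {t0..}" by auto
    have g1: "(\<lambda>r. g r - (\<delta>^2 + c * (r - t0))) s \<ge> 0"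
    proof (rule left_lim_ge[of t0 s])
      show "continuous_on {t0..s} (\<lambda>r. g r - (\<delta>^2 + c * (r - t0)))"
        using continuous_on_subset[OF contg sub] by (intro continuous_intros) auto
      show "\<forall>r. t0 \<le> r \<and> r < s \<longrightarrow> 0 \<le> g r - (\<delta>^2 + c * (r - t0))" using below unfolding P_def by auto
    qed (use s in auto)
    have w1: "W s \<ge> 0"
    proof (rule left_lim_ge[of t0 s])
      show "continuous_on {t0..s} W" using continuous_on_subset[OF contW sub] .
      show "\<forall>r. t0 \<le> r \<and> r < s \<longrightarrow> 0 \<le> W r" using below unfolding P_def by auto
    qed (use s in auto)
    have "c * (s - t0) \<ge> 0" using cp s by simp
    hence "g s \<ge> \<delta>^2" using g1 by simp
    moreover have "\<delta>^2 > 0" using dl by simp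
    ultimately have "(W s)^2 > 0" using Wsq[of s] by linarith
    hence "W s \<noteq> 0" by auto
    thus "P s" using w1 g1 unfolding P_def by simp
  next
    fix s assume s: "t0 \<le> s" "s < T" and Ps: "P s"
    have nes: "xE s \<noteq> xP s" using ncT s by auto
    have ders: "(xP has_vector_derivative pursuer_law \<nu> \<delta> xE0 xP0 (xE s) (xP s)) (at s within {t0..})"
      using derH s ncT by auto
    have Ws: "Wf \<nu> RC (xE s) (xP s) > 0" using Ps unfolding P_def W_def by simp
    have "c * (s - t0) \<ge> 0" using cp s by simp
    hence Gs: "Gf \<nu> RC xC (xE s) (xP s) \<ge> \<delta>^2" using Ps unfolding P_def g_def by simp
    obtain d where d: "d > 0" and dd: "\<forall>h. 0 < h \<and> h < d \<longrightarrow>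
      Gf \<nu> RC xC (xE (s+h)) (xP (s+h)) \<ge> Gf \<nu> RC xC (xE s) (xP s) + c * h
      \<and> Wf \<nu> RC (xE (s+h)) (xP (s+h)) > 0"
      using local_step[OF nu dl RC_def xC_def lip s(1) nes ders Ws Gs] unfolding c_def by blast
    show "\<exists>d>0. \<forall>h. 0 < h \<and> h < d \<longrightarrow> P (s+h)"
    proof (intro exI[of _ d] conjI allI impI d)
      fix h assume h: "0 < h \<and> h < d"
      have "g (s+h) \<ge> g s + c * h" "W (s+h) > 0" using dd h unfolding g_def W_def by auto
      moreover have "g s \<ge> \<delta>^2 + c * (s - t0)" using Ps unfolding P_def by simp
      ultimately show "P (s+h)" unfolding P_def by (simp add: algebra_simps)
    qed
  qed
  have ex: "\<exists>t1\<ge>t0. xP t1 = xE t1"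
  proof (rule ccontr)
    assume "\<not> ?thesis"
    hence nc: "\<forall>s. t0 \<le> s \<longrightarrow> xP s \<noteq> xE s" by auto
    define T where "T = t0 + RC^2 / c + 1"
    have T0: "t0 \<le> T" unfolding T_def using cp by simp
    have "P T" using INV[OF T0] nc by auto
    hence "g T \<ge> \<delta>^2 + c * (RC^2/c + 1)" "W T > 0" unfolding P_def T_def by auto
    moreover have "c * (RC^2/c + 1) = RC^2 + c" using cp by (simp add: field_simps)
    moreover have "(W T)^2 \<le> RC^2" using \<open>W T > 0\<close> Wle[of T] by (simp add: power_mono)
    moreover have "\<delta>^2 > 0" using dl by simp
    ultimately show False using Wsq[of T] cp by linarith
  qed
  define S where "S = {t0..} \<inter> (\<lambda>t. xP t - xE t) -` {0}"
  have Sc: "closed S" unfolding S_def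
    by (rule continuous_closed_preimage) (auto intro!: continuous_intros contE contP)
  have Sne: "S \<noteq> {}" using ex unfolding S_def by auto
  have Sb: "bdd_below S" unfolding S_def by (rule bdd_belowI[of _ t0]) auto
  define tf where "tf = Inf S"
  have tfS: "tf \<in> S" unfolding tf_def using closed_contains_Inf[OF Sne Sb Sc] .
  have tf0: "t0 \<le> tf" "xP tf = xE tf" using tfS unfolding S_def by auto
  have before: "\<forall>t. t0 \<le> t \<and> t < tf \<longrightarrow> xP t \<noteq> xE t"
  proof (intro allI impI)
    fix t assume t: "t0 \<le> t \<and> t < tf"
    show "xP t \<noteq> xE t"
    proof
      assume "xP t = xE t"
      hence "t \<in> S" using t unfolding S_def by auto
      hence "tf \<le> t" unfolding tf_def using Sb by (simp add: cInf_lower)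
      thus False using t by simp
    qed
  qed
  have cap: "capture_time t0 xE xP tf" unfolding capture_time_def using tf0 before by auto
  have tfgt: "t0 < tf"
  proof -
    have "tf \<noteq> t0" using tf0(2) P0 E0 ne by auto
    thus ?thesis using tf0 by simp
  qed
  have Fpos: "\<forall>r. t0 \<le> r \<and> r < tf \<longrightarrow> 0 \<le> F r"
  proof (intro allI impI)
    fix r assume r: "t0 \<le> r \<and> r < tf"
    have "\<forall>s. t0 \<le> s \<and> s \<le> r \<longrightarrow> xP s \<noteq> xE s" using before r by auto
    hence "P r" using INV[of r] r by blast
    hence Wr: "W r > 0" and gr0: "g r \<ge> \<delta>^2 + c * (r - t0)" unfolding P_def by auto
    have "c * (r - t0) \<ge> 0" using cp r by simp
    moreover have "\<delta>^2 \<ge> 0" by simp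
    ultimately have gr: "g r \<ge> 0" using gr0 by linarith
    have "(norm (apollonius_center \<nu> (xE r) (xP r) - xC))^2 \<le> (W r)^2"
      using gr unfolding g_def W_def Gf_def by simp
    hence "norm (apollonius_center \<nu> (xE r) (xP r) - xC) \<le> W r"
      using Wr power2_le_imp_le by (metis less_imp_le)
    thus "0 \<le> F r" unfolding F_def W_def Wf_def by simp
  qed
  have "F tf \<ge> 0"
    by (rule left_lim_ge[OF continuous_on_subset[OF contF] tfgt Fpos]) auto
  moreover have "apollonius_center \<nu> (xE tf) (xP tf) = xE tf"
    unfolding tf0(2) apollonius_center_def scaleR_left_diff_distrib[symmetric] cs(7) by simp
  ultimately have "norm (xE tf - xC) \<le> RC" unfolding F_def tf0(2) by simp
  thus ?thesis using cap unfolding RC_def xC_def by (auto simp: dist_norm)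
qed



lemma proj_exists:
  fixes x c0 :: pt
  assumes "R0 \<ge> 0" "dist x c0 \<le> R0 + \<delta>" "\<delta> \<ge> 0"
  shows "\<exists>q. dist q c0 \<le> R0 \<and> dist x q \<le> \<delta>"
proof (cases "dist x c0 \<le> R0")
  case True thus ?thesis using assms by (intro exI[of _ x]) (auto simp: dist_norm)
next
  case False
  define n where "n = dist x c0"
  have np: "n > R0" "n > 0" using False assms unfolding n_def by auto
  define q where "q = c0 + (R0/n) *\<^sub>R (x - c0)"
  have "dist q c0 = R0/n * n" unfolding q_def n_def using assms np by (simp add: dist_norm n_def)
  hence d1: "dist q c0 = R0" using np by simp
  have "x - q = (1 - R0/n) *\<^sub>R (x - c0)" unfolding q_def by (simp add: algebra_simps)
  hence "dist x q = (1 - R0/n) * n" using np by (simp add: dist_norm n_def)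
  also have "\<dots> = n - R0" using np by (simp add: field_simps)
  finally have "dist x q \<le> \<delta>" using assms unfolding n_def by simp
  thus ?thesis using d1 by auto
qed

theorem mainTheorem5:
  fixes \<nu> t0 :: real and xE0 xP0 :: pt and \<phi> :: "pt \<Rightarrow> real"
  assumes "0 < \<nu>" and "\<nu> < 1"
    and "xE0 \<noteq> xP0"
    and "continuous_on UNIV \<phi>"
  shows "\<forall>\<epsilon>>0. \<exists>\<delta>>0.
     (\<forall>xs \<in> argmin_set \<phi> \<nu> xE0 xP0. \<forall>xP tf.
        admissible_traj 1 t0 xP0 xP \<longrightarrow>
        capture_time t0 (straight_evader \<nu> t0 xE0 xs) xP tf \<longrightarrow>
        \<phi> (straight_evader \<nu> t0 xE0 xs tf) \<le> phi_star \<phi> \<nu> xE0 xP0)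
   \<and> (\<forall>xE xP.
        admissible_traj \<nu> t0 xE0 xE \<longrightarrow>
        xP t0 = xP0 \<longrightarrow>
        continuous_on {t0..} xP \<longrightarrow>
        (\<forall>t\<ge>t0. (\<forall>s. t0 \<le> s \<and> s \<le> t \<longrightarrow> xP s \<noteq> xE s) \<longrightarrow>
             (xP has_vector_derivative pursuer_law \<nu> \<delta> xE0 xP0 (xE t) (xP t)) (at t within {t0..})) \<longrightarrow>
        (\<exists>tf. capture_time t0 xE xP tf \<and> \<phi> (xE tf) \<ge> phi_star \<phi> \<nu> xE0 xP0 - \<epsilon>))"
proof (intro allI impI)
  fix \<epsilon> :: real assume ep: "\<epsilon> > 0"
  note nu = assms(1,2)
  note cs = ap_consts[OF nu]
  define c0 where "c0 = apollonius_center \<nu> xE0 xP0"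
  define R0 where "R0 = apollonius_radius \<nu> xE0 xP0"
  have R0p: "R0 \<ge> 0" unfolding R0_def apollonius_radius_def using cs by simp
  define K where "K = cball c0 (R0 + 1)"
  have "uniformly_continuous_on K \<phi>"
    by (rule compact_uniformly_continuous) (auto intro: continuous_on_subset[OF assms(4)] simp: K_def)
  then obtain \<delta>1 where d1: "\<delta>1 > 0" and d1u: "\<forall>x\<in>K. \<forall>x'\<in>K. dist x' x < \<delta>1 \<longrightarrow> dist (\<phi> x') (\<phi> x) < \<epsilon>"
    unfolding uniformly_continuous_on_def using ep by blast
  define \<delta> where "\<delta> = min 1 (\<delta>1/2)"
  have dp: "\<delta> > 0" unfolding \<delta>_def using d1 by simp
  have disc: "apollonius_disc \<nu> xE0 xP0 = cball c0 R0" unfolding apollonius_disc_def c0_def R0_def ..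
  have bdd: "bdd_below (\<phi> ` apollonius_disc \<nu> xE0 xP0)"
  proof -
    have "compact (\<phi> ` cball c0 R0)"
      by (rule compact_continuous_image) (auto intro: continuous_on_subset[OF assms(4)])
    thus ?thesis unfolding disc by (intro bounded_imp_bdd_below compact_imp_bounded)
  qed
  have A: "\<forall>xs \<in> argmin_set \<phi> \<nu> xE0 xP0. \<forall>xP tf.
        admissible_traj 1 t0 xP0 xP \<longrightarrow>
        capture_time t0 (straight_evader \<nu> t0 xE0 xs) xP tf \<longrightarrow>
        \<phi> (straight_evader \<nu> t0 xE0 xs tf) \<le> phi_star \<phi> \<nu> xE0 xP0"
  proof (intro ballI allI impI)
    fix xs xP tf
    assume xs: "xs \<in> argmin_set \<phi> \<nu> xE0 xP0" and adm: "admissible_traj 1 t0 xP0 xP"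
      and cap: "capture_time t0 (straight_evader \<nu> t0 xE0 xs) xP tf"
    have xsd: "xs \<in> apollonius_disc \<nu> xE0 xP0" "\<phi> xs = phi_star \<phi> \<nu> xE0 xP0"
      using xs unfolding argmin_set_def by auto
    show "\<phi> (straight_evader \<nu> t0 xE0 xs tf) \<le> phi_star \<phi> \<nu> xE0 xP0"
      using part_a[OF nu assms(3) xsd(1) adm cap] xsd(2) by simp
  qed
  have B: "\<forall>xE xP.
        admissible_traj \<nu> t0 xE0 xE \<longrightarrow>
        xP t0 = xP0 \<longrightarrow>
        continuous_on {t0..} xP \<longrightarrow>
        (\<forall>t\<ge>t0. (\<forall>s. t0 \<le> s \<and> s \<le> t \<longrightarrow> xP s \<noteq> xE s) \<longrightarrow>
             (xP has_vector_derivative pursuer_law \<nu> \<delta> xE0 xP0 (xE t) (xP t)) (at t within {t0..})) \<longrightarrow>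
        (\<exists>tf. capture_time t0 xE xP tf \<and> \<phi> (xE tf) \<ge> phi_star \<phi> \<nu> xE0 xP0 - \<epsilon>)"
  proof (intro allI impI)
    fix xE xP :: "real \<Rightarrow> pt"
    assume admE: "admissible_traj \<nu> t0 xE0 xE" and P0: "xP t0 = xP0" and contP: "continuous_on {t0..} xP"
      and derH: "\<forall>t\<ge>t0. (\<forall>s. t0 \<le> s \<and> s \<le> t \<longrightarrow> xP s \<noteq> xE s) \<longrightarrow>
             (xP has_vector_derivative pursuer_law \<nu> \<delta> xE0 xP0 (xE t) (xP t)) (at t within {t0..})"
    obtain tf where cap: "capture_time t0 xE xP tf" and loc: "dist (xE tf) c0 \<le> R0 + \<delta>"
      using part_b_loc[OF nu assms(3) dp admE P0 contP derH] unfolding c0_def R0_def by blast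
    obtain q where q: "dist q c0 \<le> R0" "dist (xE tf) q \<le> \<delta>" using proj_exists[OF R0p loc less_imp_le[OF dp]] by blast
    have qd: "q \<in> apollonius_disc \<nu> xE0 xP0" unfolding disc using q by (simp add: dist_commute)
    have qK: "q \<in> K" unfolding K_def using q by (simp add: dist_commute)
    have d1': "\<delta> \<le> 1" "\<delta> < \<delta>1" unfolding \<delta>_def using d1 by auto
    have xK: "xE tf \<in> K" unfolding K_def using loc d1' by (simp add: dist_commute)
    have "dist (\<phi> (xE tf)) (\<phi> q) < \<epsilon>" using d1u qK xK q(2) d1' by auto
    moreover have "\<phi> q \<ge> phi_star \<phi> \<nu> xE0 xP0" unfolding phi_star_def using qd bdd by (simp add: cInf_lower)
    ultimately have "\<phi> (xE tf) \<ge> phi_star \<phi> \<nu> xE0 xP0 - \<epsilon>" by (simp add: dist_real_def)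
    thus "\<exists>tf. capture_time t0 xE xP tf \<and> \<phi> (xE tf) \<ge> phi_star \<phi> \<nu> xE0 xP0 - \<epsilon>" using cap by blast
  qed
  show "\<exists>\<delta>>0.
     (\<forall>xs \<in> argmin_set \<phi> \<nu> xE0 xP0. \<forall>xP tf.
        admissible_traj 1 t0 xP0 xP \<longrightarrow>
        capture_time t0 (straight_evader \<nu> t0 xE0 xs) xP tf \<longrightarrow>
        \<phi> (straight_evader \<nu> t0 xE0 xs tf) \<le> phi_star \<phi> \<nu> xE0 xP0)
   \<and> (\<forall>xE xP.
        admissible_traj \<nu> t0 xE0 xE \<longrightarrow>
        xP t0 = xP0 \<longrightarrow>
        continuous_on {t0..} xP \<longrightarrow>
        (\<forall>t\<ge>t0. (\<forall>s. t0 \<le> s \<and> s \<le> t \<longrightarrow> xP s \<noteq> xE s) \<longrightarrow>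
             (xP has_vector_derivative pursuer_law \<nu> \<delta> xE0 xP0 (xE t) (xP t)) (at t within {t0..})) \<longrightarrow>
        (\<exists>tf. capture_time t0 xE xP tf \<and> \<phi> (xE tf) \<ge> phi_star \<phi> \<nu> xE0 xP0 - \<epsilon>))"
    using dp A B by blast
qed


end
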